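(* Let $H:\mathbb R\times\mathbb R\times\Omega\to\mathbb R$ satisfy (H1)–(H6) described in the context. Then for every $\omega\in\Omega$, $$\tilde A(\omega)=\inf_{v\in\mathbf{Lip}}\ \sup_{y\in\mathbb R}H(Dv,y,\omega)=\sup_{y\in\mathbb R}H(0,y,\omega)<\infty.$$
   Context: $\Omega$ is a set (a probability space) and $H:\mathbb R\times\mathbb R\times\Omega\to\mathbb R$, $(p,y,\omega)\mapsto H(p,y,\omega)$. (H1) $H$ is Lipschitz in $p$ uniformly in $(y,\omega)$. (H2) There are $c_0,C_0,\gamma>0$ with $-c_0|p+\gamma|\le H(p,y,\omega)\le C_0|p+\gamma|$. (H3) $\lim_{|p|\to\infty}\inf_{(y,\omega)}H(p,y,\omega)=+\infty$. (H4) There is a modulus $w$ with $|H(p,y,\omega)-H(p,x,\omega)|\le w(|x-y|(1+|p|))$. (H5) $p\mapsto H(p,y,\omega)$ is convex. (H6) $H(p,y,\omega)\ge H(0,y,\omega)$ for all $p,y,\omega$. $\mathbf{Lip}$ denotes the set of globally Lipschitz real functions on $\mathbb R$. The stochastic flux limiter is $\tilde A(\omega)=\inf\{\mu:\ \exists v\in\mathbf{Lip}$ with $H(Dv,y,\omega)\le\mu$ in $\mathbb R$ in the viscosity sense$\}$. *)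

theory Defs
  imports "HOL-Analysis.Analysis"
begin

definition Lip :: "(real \<Rightarrow> real) set" where
  "Lip = {v. \<exists>L. L-lipschitz_on UNIV v}"

text \<open>v is a viscosity subsolution of H(Dv,y,omega) <= mu in R
  (C^1 test functions touching from above).\<close>
definition visc_sub :: "(real \<Rightarrow> real \<Rightarrow> 'w \<Rightarrow> real) \<Rightarrow> 'w \<Rightarrow> real \<Rightarrow> (real \<Rightarrow> real) \<Rightarrow> bool" where
  "visc_sub H \<omega> \<mu> v \<longleftrightarrow> continuous_on UNIV v \<and>
     (\<forall>\<phi> \<phi>' y. (\<forall>x. (\<phi> has_real_derivative \<phi>' x) (at x)) \<and> continuous_on UNIV \<phi>' \<and>
        (\<exists>r>0. \<forall>x. \<bar>x - y\<bar> < r \<longrightarrow> v x - \<phi> x \<le> v y - \<phi> y)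
        \<longrightarrow> H (\<phi>' y) y \<omega> \<le> \<mu>)"

definition flux_limiter :: "(real \<Rightarrow> real \<Rightarrow> 'w \<Rightarrow> real) \<Rightarrow> 'w \<Rightarrow> ereal" where
  "flux_limiter H \<omega> = Inf (ereal ` {\<mu>. \<exists>v\<in>Lip. visc_sub H \<omega> \<mu> v})"

text \<open>sup over y of H(Dv(y),y,omega), with Dv taken at the points where
  the Lipschitz function v is differentiable.\<close>
definition sup_H_Dv :: "(real \<Rightarrow> real \<Rightarrow> 'w \<Rightarrow> real) \<Rightarrow> 'w \<Rightarrow> (real \<Rightarrow> real) \<Rightarrow> ereal" where
  "sup_H_Dv H \<omega> v = Sup {ereal (H d y \<omega>) | d y. (v has_real_derivative d) (at y)}"

end

theory Submission
  imports Defs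
begin



definition sl :: "(real \<Rightarrow> real) \<Rightarrow> real \<Rightarrow> real \<Rightarrow> real" where
  "sl f c r = (f (c + r) - f (c - r)) / (2 * r)"

definition Eset :: "(real \<Rightarrow> real) \<Rightarrow> real \<Rightarrow> real \<Rightarrow> real set" where
  "Eset f p q = {x. (\<forall>\<delta>>0. \<exists>c r. 0 < r \<and> r < \<delta> \<and> \<bar>x - c\<bar> < r \<and> sl f c r < p) \<and>
                   (\<forall>\<delta>>0. \<exists>c r. 0 < r \<and> r < \<delta> \<and> \<bar>x - c\<bar> < r \<and> q < sl f c r)}"

lemma im_ball:
  fixes g :: "real \<Rightarrow> real"
  assumes mono: "mono g" and cont: "continuous_on UNIV g" and r: "0 < r"
  shows "emeasure (interval_measure g) (ball c r) = ennreal (g (c+r) - g (c-r))"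
proof -
  let ?M = "interval_measure g"
  have m: "\<And>x y. x \<le> y \<Longrightarrow> g x \<le> g y" using mono by (simp add: mono_def)
  have rc: "\<And>a. continuous (at_right a) g"
    using cont by (simp add: continuous_on_eq_continuous_at continuous_at_imp_continuous_at_within)
  have 1: "emeasure ?M {c-r<..c+r} = ennreal (g (c+r) - g (c-r))"
    using r by (intro emeasure_interval_measure_Ioc m rc) auto
  have 2: "emeasure ?M {c+r..c+r} = ennreal (g (c+r) - g (c+r))"
    by (intro emeasure_interval_measure_Icc m cont) auto
  have "{c-r<..c+r} = ball c r \<union> {c+r..c+r}"
    using r by (auto simp: ball_eq_greaterThanLessThan)
  then have "emeasure ?M {c-r<..c+r} = emeasure ?M (ball c r) + emeasure ?M {c+r..c+r}"
    by (simp add: plus_emeasure ball_eq_greaterThanLessThan)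
  with 1 2 show ?thesis by simp
qed

lemma leb_ball:
  fixes c r :: real
  assumes "0 < r"
  shows "emeasure lebesgue (ball c r) = ennreal (2 * r)"
  using assms by (simp add: ball_eq_greaterThanLessThan)



lemma open_sets_lebesgue: "open (U::real set) \<Longrightarrow> U \<in> sets lebesgue"
  by (metis borel_open sets_completionI_sets sets_lborel)

lemma key:
  fixes g :: "real \<Rightarrow> real"
  assumes mono: "mono g" and cont: "continuous_on UNIV g" and pq: "0 < p" "p < q"
    and SE: "S \<subseteq> Eset g p q" and G: "open G" "S \<subseteq> G" "G \<in> lmeasurable"
  shows "\<exists>W. S \<subseteq> W \<and> W \<in> lmeasurable \<and> q * measure lebesgue W \<le> p * measure lebesgue G"
proof -
  define B where "B i = ball (fst i) (snd i)" for i :: "real \<times> real"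
  define K1 where "K1 = {i. 0 < snd i \<and> B i \<subseteq> G \<and> sl g (fst i) (snd i) < p}"
  have cov1: "\<exists>i. i \<in> K1 \<and> x \<in> ball (fst i) (snd i) \<and> snd i < d" if "x \<in> S" "0 < d" for x d
  proof -
    have "x \<in> G" using G(2) that by blast
    then obtain \<rho> where \<rho>: "\<rho> > 0" "ball x \<rho> \<subseteq> G" using open_contains_ball_eq[OF G(1)] by blast
    have xE: "x \<in> Eset g p q" using SE that by auto
    have all: "\<forall>\<delta>>0. \<exists>c r. 0 < r \<and> r < \<delta> \<and> \<bar>x - c\<bar> < r \<and> sl g c r < p"
      using xE by (simp add: Eset_def)
    have mpos: "min d (\<rho>/2) > 0" using \<rho> that by simp
    obtain c r where cr: "0 < r" "r < min d (\<rho>/2)" "\<bar>x - c\<bar> < r" "sl g c r < p"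
      using mp[OF spec[OF all, of "min d (\<rho>/2)"] mpos] by auto
    have "ball c r \<subseteq> ball x \<rho>"
      using cr by (auto simp: dist_real_def)
    then show ?thesis
      using cr \<rho> by (intro exI[of _ "(c,r)"]) (auto simp: K1_def B_def dist_real_def)
  qed
  obtain C1 where C1: "countable C1" "C1 \<subseteq> K1"
      "pairwise (\<lambda>i j. disjnt (ball (fst i) (snd i)) (ball (fst j) (snd j))) C1"
      "negligible (S - (\<Union>i\<in>C1. ball (fst i) (snd i)))"
    by (rule Vitali_covering_theorem_balls[of S K1 fst snd, OF cov1])
  define U1 where "U1 = (\<Union>i\<in>C1. B i)"
  define K2 where "K2 = {i. 0 < snd i \<and> (\<exists>j\<in>C1. B i \<subseteq> B j) \<and> q < sl g (fst i) (snd i)}"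
  have cov2: "\<exists>i. i \<in> K2 \<and> x \<in> ball (fst i) (snd i) \<and> snd i < d" if xs: "x \<in> S \<inter> U1" "0 < d" for x d
  proof -
    obtain j where j: "j \<in> C1" "x \<in> B j" using xs U1_def by blast
    obtain \<rho> where \<rho>: "\<rho> > 0" "ball x \<rho> \<subseteq> B j" using j open_contains_ball_eq[OF open_ball] unfolding B_def by blast
    have xE: "x \<in> Eset g p q" using SE that by auto
    have all: "\<forall>\<delta>>0. \<exists>c r. 0 < r \<and> r < \<delta> \<and> \<bar>x - c\<bar> < r \<and> q < sl g c r"
      using xE by (simp add: Eset_def)
    have mpos: "min d (\<rho>/2) > 0" using \<rho> that by simp
    obtain c r where cr: "0 < r" "r < min d (\<rho>/2)" "\<bar>x - c\<bar> < r" "q < sl g c r"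
      using mp[OF spec[OF all, of "min d (\<rho>/2)"] mpos] by auto
    have "ball c r \<subseteq> ball x \<rho>"
      using cr by (auto simp: dist_real_def)
    then show ?thesis
      using cr \<rho> j by (intro exI[of _ "(c,r)"]) (auto simp: K2_def B_def dist_real_def)
  qed
  obtain C2 where C2: "countable C2" "C2 \<subseteq> K2"
      "pairwise (\<lambda>i j. disjnt (ball (fst i) (snd i)) (ball (fst j) (snd j))) C2"
      "negligible ((S \<inter> U1) - (\<Union>i\<in>C2. ball (fst i) (snd i)))"
    by (rule Vitali_covering_theorem_balls[of "S \<inter> U1" K2 fst snd, OF cov2])
  define U2 where "U2 = (\<Union>i\<in>C2. B i)"
  define N where "N = (S - U1) \<union> ((S \<inter> U1) - U2)"
  have negN: "negligible N"
    using C1(4) C2(4) unfolding N_def U1_def U2_def B_def by (rule negligible_Un)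
  have U1O: "U1 \<subseteq> G" using C1(2) unfolding U1_def K1_def by auto
  have U21: "U2 \<subseteq> U1" using C2(2) unfolding U2_def U1_def K2_def by fastforce
  have U1open: "open U1" unfolding U1_def B_def by auto
  have U2open: "open U2" unfolding U2_def B_def by auto
  have U1m: "U1 \<in> lmeasurable"
    using U1O G(3) U1open by (meson fmeasurableI2 open_sets_lebesgue)
  have U2m: "U2 \<in> lmeasurable"
    using U21 U1m U2open by (meson fmeasurableI2 open_sets_lebesgue)
  let ?M = "interval_measure g"
  have dj1: "disjoint_family_on B C1"
    using C1(3) unfolding disjoint_family_on_def pairwise_def disjnt_def B_def by blast
  have dj2: "disjoint_family_on B C2"
    using C2(3) unfolding disjoint_family_on_def pairwise_def disjnt_def B_def by blast
  have Bb: "B i \<in> sets borel" for i unfolding B_def by auto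
  have Bl: "B i \<in> sets lebesgue" for i unfolding B_def by (simp add: open_sets_lebesgue)
  have eL1: "emeasure lebesgue U1 = (\<integral>\<^sup>+i. emeasure lebesgue (B i) \<partial>count_space C1)"
    unfolding U1_def by (rule emeasure_UN_countable) (use Bl C1(1) dj1 in auto)
  have eL2: "emeasure lebesgue U2 = (\<integral>\<^sup>+i. emeasure lebesgue (B i) \<partial>count_space C2)"
    unfolding U2_def by (rule emeasure_UN_countable) (use Bl C2(1) dj2 in auto)
  have eM1: "emeasure ?M U1 = (\<integral>\<^sup>+i. emeasure ?M (B i) \<partial>count_space C1)"
    unfolding U1_def by (rule emeasure_UN_countable) (use Bb C1(1) dj1 in auto)
  have eM2: "emeasure ?M U2 = (\<integral>\<^sup>+i. emeasure ?M (B i) \<partial>count_space C2)"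
    unfolding U2_def by (rule emeasure_UN_countable) (use Bb C2(1) dj2 in auto)
  have b2: "ennreal q * emeasure lebesgue (B i) \<le> emeasure ?M (B i)" if "i \<in> C2" for i
  proof -
    obtain c r where i: "i = (c, r)" by (cases i)
    have r: "0 < r" "q < sl g c r" using that C2(2) i unfolding K2_def by auto
    then have "q * (2 * r) < g (c + r) - g (c - r)"
      unfolding sl_def by (simp add: pos_less_divide_eq)
    moreover have "emeasure lebesgue (B i) = ennreal (2 * r)"
      using r i leb_ball by (simp add: B_def)
    moreover have "emeasure ?M (B i) = ennreal (g (c + r) - g (c - r))"
      using r i im_ball[OF mono cont] by (simp add: B_def)
    ultimately show ?thesis using pq r
      by (auto simp: ennreal_mult''[symmetric] intro!: ennreal_leI)
  qed
  have b1: "emeasure ?M (B i) \<le> ennreal p * emeasure lebesgue (B i)" if "i \<in> C1" for i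
  proof -
    obtain c r where i: "i = (c, r)" by (cases i)
    have r: "0 < r" "sl g c r < p" using that C1(2) i unfolding K1_def by auto
    then have "g (c + r) - g (c - r) < p * (2 * r)"
      unfolding sl_def by (simp add: divide_less_eq)
    moreover have "emeasure lebesgue (B i) = ennreal (2 * r)"
      using r i leb_ball by (simp add: B_def)
    moreover have "emeasure ?M (B i) = ennreal (g (c + r) - g (c - r))"
      using r i im_ball[OF mono cont] by (simp add: B_def)
    ultimately show ?thesis using pq r
      by (auto simp: ennreal_mult''[symmetric] intro!: ennreal_leI)
  qed
  have "ennreal q * emeasure lebesgue U2 = (\<integral>\<^sup>+i. ennreal q * emeasure lebesgue (B i) \<partial>count_space C2)"
    unfolding eL2 by (rule nn_integral_cmult[symmetric]) simp
  also have "\<dots> \<le> (\<integral>\<^sup>+i. emeasure ?M (B i) \<partial>count_space C2)"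
    by (rule nn_integral_mono) (use b2 in auto)
  also have "\<dots> = emeasure ?M U2" using eM2 by simp
  also have "\<dots> \<le> emeasure ?M U1"
    by (rule emeasure_mono[OF U21]) (simp add: U1open)
  also have "\<dots> = (\<integral>\<^sup>+i. emeasure ?M (B i) \<partial>count_space C1)" using eM1 by simp
  also have "\<dots> \<le> (\<integral>\<^sup>+i. ennreal p * emeasure lebesgue (B i) \<partial>count_space C1)"
    by (rule nn_integral_mono) (use b1 in auto)
  also have "\<dots> = ennreal p * emeasure lebesgue U1"
    unfolding eL1 by (rule nn_integral_cmult) simp
  also have "\<dots> \<le> ennreal p * emeasure lebesgue G"
    by (intro mult_left_mono emeasure_mono U1O) (use G(3) in auto)
  finally have ineq: "ennreal q * emeasure lebesgue U2 \<le> ennreal p * emeasure lebesgue G" .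
  have "emeasure lebesgue U2 = ennreal (measure lebesgue U2)"
    using U2m by (simp add: emeasure_eq_measure2)
  moreover have "emeasure lebesgue G = ennreal (measure lebesgue G)"
    using G(3) by (simp add: emeasure_eq_measure2)
  ultimately have "ennreal (q * measure lebesgue U2) \<le> ennreal (p * measure lebesgue G)"
    using ineq pq by (simp add: ennreal_mult''[symmetric] ennreal_mult'[symmetric])
  then have qU2: "q * measure lebesgue U2 \<le> p * measure lebesgue G"
    using pq by (subst (asm) ennreal_le_iff) auto
  have "measure lebesgue (U2 \<union> N) = measure lebesgue U2"
    using negN U2m by (intro measure_Un_null_set) (auto simp: negligible_iff_null_sets)
  moreover have "U2 \<union> N \<in> lmeasurable"
    using U2m negN by (simp add: fmeasurable.Un negligible_imp_measurable)
  moreover have "S \<subseteq> U2 \<union> N" unfolding N_def by blast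
  ultimately show ?thesis using qU2 by (intro exI[of _ "U2 \<union> N"]) auto
qed


lemma core_bdd:
  fixes g :: "real \<Rightarrow> real"
  assumes mono: "mono g" and cont: "continuous_on UNIV g" and pq: "0 < p" "p < q"
    and SE: "S \<subseteq> Eset g p q" and bS: "bounded S"
  shows "negligible S"
proof -
  define Ms where "Ms = {measure lebesgue G | G. open G \<and> S \<subseteq> G \<and> G \<in> lmeasurable}"
  obtain R where R: "S \<subseteq> ball 0 R" using bounded_subset_ballD[OF bS] by blast
  have ne: "Ms \<noteq> {}" unfolding Ms_def using R by (auto intro!: exI[of _ "ball 0 R"])
  have bdd: "bdd_below Ms" unfolding Ms_def bdd_below_def by (auto intro!: exI[of _ 0])
  define s where "s = Inf Ms"
  have s0: "0 \<le> s" unfolding s_def by (rule cInf_greatest[OF ne]) (auto simp: Ms_def)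
  have main: "q * s \<le> p * m" if mM: "m \<in> Ms" for m
  proof -
    obtain G where G: "open G" "S \<subseteq> G" "G \<in> lmeasurable" "m = measure lebesgue G"
      using mM unfolding Ms_def by blast
    obtain W where W: "S \<subseteq> W" "W \<in> lmeasurable" "q * measure lebesgue W \<le> p * measure lebesgue G"
      using key[OF mono cont pq SE G(1) G(2) G(3)] by auto
    have eps: "q * s \<le> p * m + q * e" if e: "e > 0" for e
    proof -
      have Wl: "W \<in> sets lebesgue" using W(2) by (simp add: fmeasurable_def)
      obtain T where T: "open T" "W \<subseteq> T" "T - W \<in> lmeasurable" "emeasure lebesgue (T - W) < ennreal e"
        by (rule sets_lebesgue_outer_open[OF Wl e])
      have TU: "T = W \<union> (T - W)" using T(2) by blast
      have Tm: "T \<in> lmeasurable" by (subst TU) (rule fmeasurable.Un[OF W(2) T(3)])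
      have "emeasure lebesgue (T - W) = ennreal (measure lebesgue (T - W))"
        using T(3) by (simp add: emeasure_eq_measure2)
      then have mTW: "measure lebesgue (T - W) < e" using T(4) e
        by (simp add: ennreal_less_iff)
      have "measure lebesgue T \<le> measure lebesgue W + measure lebesgue (T - W)"
        using measure_Un_le[OF fmeasurableD[OF W(2)] fmeasurableD[OF T(3)]] by (simp only: TU[symmetric])
      moreover have "s \<le> measure lebesgue T"
      proof -
        have "S \<subseteq> T" using T(2) W(1) by blast
        then have TM: "measure lebesgue T \<in> Ms" unfolding Ms_def using T(1) Tm by blast
        show ?thesis unfolding s_def by (rule cInf_lower[OF TM bdd])
      qed
      ultimately have "s \<le> measure lebesgue W + e" using mTW by linarith
      then have "q * s \<le> q * (measure lebesgue W + e)"
        using pq by (intro mult_left_mono) auto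
      then have "q * s \<le> q * measure lebesgue W + q * e"
        by (simp add: distrib_left)
      then show ?thesis using W(3) unfolding G(4) by linarith
    qed
    show ?thesis
    proof (rule field_le_epsilon)
      fix e :: real assume "0 < e"
      then have "q * s \<le> p * m + q * (e / q)" using pq by (intro eps) auto
      then show "q * s \<le> p * m + e" using pq by simp
    qed
  qed
  have "q / p * s \<le> s"
    unfolding s_def[of] 
  proof (rule cInf_greatest[OF ne])
    fix m assume "m \<in> Ms"
    then have "q * s \<le> p * m" by (rule main)
    then show "q / p * Inf Ms \<le> m" using pq by (simp add: s_def field_simps)
  qed
  then have "q * s \<le> p * s" using pq by (simp add: field_simps)
  then have "s \<le> 0"
  proof (rule contrapos_pp)
    assume "\<not> s \<le> 0"
    then have "p * s < q * s" using pq by (intro mult_strict_right_mono) auto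
    then show "\<not> q * s \<le> p * s" by linarith
  qed
  then have s00: "s = 0" using s0 by simp
  show ?thesis
    unfolding negligible_outer
  proof (intro allI impI)
    fix e :: real assume "0 < e"
    then have "Inf Ms < e" using s00 s_def by simp
    then obtain m where "m \<in> Ms" "m < e" using cInf_lessD[OF ne] by blast
    then show "\<exists>T. S \<subseteq> T \<and> T \<in> lmeasurable \<and> measure lebesgue T < e"
      unfolding Ms_def by blast
  qed
qed

lemma sl_nonneg: "mono g \<Longrightarrow> 0 < r \<Longrightarrow> 0 \<le> sl g c r"
  unfolding sl_def by (auto simp: mono_def intro!: divide_nonneg_pos)

lemma core:
  fixes g :: "real \<Rightarrow> real"
  assumes mono: "mono g" and cont: "continuous_on UNIV g" and pq: "p < q"
  shows "negligible (Eset g p q)"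
proof (cases "0 < p")
  case False
  have "Eset g p q = {}"
  proof (rule ccontr)
    assume "Eset g p q \<noteq> {}"
    then obtain x where "x \<in> Eset g p q" by blast
    then have "\<forall>\<delta>>0. \<exists>c r. 0 < r \<and> r < \<delta> \<and> \<bar>x - c\<bar> < r \<and> sl g c r < p"
      by (simp add: Eset_def)
    then obtain c r where "0 < r" "sl g c r < p"
      using zero_less_one by blast
    then show False using sl_nonneg[OF mono, of r c] False by linarith
  qed
  then show ?thesis by simp
next
  case True
  have neg: "negligible (Eset g p q \<inter> ball 0 (real n))" for n
    by (rule core_bdd[OF mono cont True pq]) auto
  have "Eset g p q \<subseteq> \<Union>(range (\<lambda>n. Eset g p q \<inter> ball 0 (real n)))"
  proof
    fix x assume "x \<in> Eset g p q"
    obtain n where "norm x < real n" using reals_Archimedean2 by blast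
    then show "x \<in> \<Union>(range (\<lambda>n. Eset g p q \<inter> ball 0 (real n)))"
      using \<open>x \<in> Eset g p q\<close> by auto
  qed
  moreover have "negligible (\<Union>(range (\<lambda>n. Eset g p q \<inter> ball 0 (real n))))"
    by (rule negligible_countable_Union) (use neg in auto)
  ultimately show ?thesis by (rule negligible_subset[rotated])
qed


lemma sl_bound:
  assumes lip: "L-lipschitz_on UNIV f" and r: "0 < r"
  shows "\<bar>sl f c r\<bar> \<le> L"
proof -
  have "dist (f (c + r)) (f (c - r)) \<le> L * dist (c + r) (c - r)"
    by (rule lipschitz_onD[OF lip]) auto
  then have "\<bar>f (c + r) - f (c - r)\<bar> \<le> L * (2 * r)" using r by (simp add: dist_real_def)
  then show ?thesis using r unfolding sl_def by (simp add: abs_divide divide_le_eq)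
qed

lemma chord_limit:
  assumes lip: "L-lipschitz_on UNIV f" and D: "0 < D"
  shows "((\<lambda>\<eta>. sl f (a + D/2) (D/2 + \<eta>)) \<longlongrightarrow> (f (a + D) - f a) / D) (at_right 0)"
proof -
  have eq: "sl f (a + D/2) (D/2 + \<eta>) = (f (a + D + \<eta>) - f (a - \<eta>)) / (D + 2 * \<eta>)" for \<eta>
  proof -
    have e1: "a + D/2 + (D/2 + \<eta>) = a + D + \<eta>" by simp
    have e2: "a + D/2 - (D/2 + \<eta>) = a - \<eta>" by simp
    have e3: "2 * (D/2 + \<eta>) = D + 2 * \<eta>" by simp
    show ?thesis unfolding sl_def e1 e2 e3 by (rule refl)
  qed
  have c: "isCont f z" for z
    using lipschitz_on_continuous_on[OF lip] continuous_on_eq_continuous_at by blast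
  have 1: "((\<lambda>\<eta>. f (a + D + \<eta>)) \<longlongrightarrow> f (a + D + 0)) (at_right 0)"
    by (intro isCont_tendsto_compose[OF c] tendsto_intros)
  have 2: "((\<lambda>\<eta>. f (a - \<eta>)) \<longlongrightarrow> f (a - 0)) (at_right 0)"
    by (intro isCont_tendsto_compose[OF c] tendsto_intros)
  have 3: "((\<lambda>\<eta>::real. D + 2 * \<eta>) \<longlongrightarrow> D + 2 * 0) (at_right 0)"
    by (intro tendsto_intros)
  have "((\<lambda>\<eta>. (f (a + D + \<eta>) - f (a - \<eta>)) / (D + 2 * \<eta>)) \<longlongrightarrow> (f (a + D + 0) - f (a - 0)) / (D + 2 * 0)) (at_right 0)"
    by (rule tendsto_divide[OF tendsto_diff[OF 1 2] 3]) (use D in simp)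
  then show ?thesis unfolding eq by simp
qed

lemma diff_from_E:
  fixes f :: "real \<Rightarrow> real"
  assumes lip: "L-lipschitz_on UNIV f"
    and notE: "\<And>p q. p \<in> \<rat> \<Longrightarrow> q \<in> \<rat> \<Longrightarrow> p < q \<Longrightarrow> x \<notin> Eset f p q"
  shows "\<exists>d. (f has_real_derivative d) (at x)"
proof -
  define Bx where "Bx \<delta> = {(c,r). 0 < r \<and> r < \<delta> \<and> \<bar>x - c\<bar> < r}" for \<delta> :: real
  define F where "F = (INF \<delta>\<in>{0<..}. principal (Bx \<delta>))"
  have evF: "eventually P F \<longleftrightarrow> (\<exists>\<delta>>0. \<forall>c r. 0 < r \<and> r < \<delta> \<and> \<bar>x - c\<bar> < r \<longrightarrow> P (c, r))" for P
  proof -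
    have "eventually P F = (\<exists>\<delta>\<in>{0<..}. eventually P (principal (Bx \<delta>)))"
      unfolding F_def
    proof (rule eventually_INF_base)
      fix a b :: real assume "a \<in> {0<..}" "b \<in> {0<..}"
      then show "\<exists>x\<in>{0<..}. principal (Bx x) \<le> inf (principal (Bx a)) (principal (Bx b))"
        by (intro bexI[of _ "min a b"]) (auto simp: Bx_def)
    qed auto
    then show ?thesis by (auto simp: eventually_principal Bx_def)
  qed
  have Fnb: "F \<noteq> bot"
  proof
    assume "F = bot"
    then have "eventually (\<lambda>_. False) F" by simp
    then obtain \<delta> where "\<delta> > 0" "\<forall>c r. 0 < r \<and> r < \<delta> \<and> \<bar>x - c\<bar> < r \<longrightarrow> False"
      unfolding evF by blast
    then have "\<not> (0 < \<delta>/2 \<and> \<delta>/2 < \<delta> \<and> \<bar>x - x\<bar> < \<delta>/2)" by blast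
    then show False using \<open>\<delta> > 0\<close> by simp
  qed
  define \<sigma> where "\<sigma> z = ereal (sl f (fst z) (snd z))" for z
  have bnd: "\<bar>sl f c r\<bar> \<le> L" if "0 < r" for c r using sl_bound[OF lip that] .
  have alw: "eventually P F" if "\<And>c r. 0 < r \<Longrightarrow> P (c, r)" for P
    unfolding evF using that by (auto intro!: exI[of _ 1])
  have bnd2: "-L \<le> sl f c r" if "0 < r" for c r using bnd[OF that, of c] by linarith
  have lo: "ereal (-L) \<le> Liminf F \<sigma>"
    by (rule Liminf_bounded, rule alw) (use bnd2 in \<open>auto simp: \<sigma>_def\<close>)
  have hi: "Limsup F \<sigma> \<le> ereal L"
    by (rule Limsup_bounded, rule alw) (use bnd in \<open>auto simp: \<sigma>_def abs_le_iff\<close>)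
  have le: "Liminf F \<sigma> \<le> Limsup F \<sigma>" by (rule Liminf_le_Limsup[OF Fnb])
  obtain l where l: "Liminf F \<sigma> = ereal l" using lo le hi by (cases "Liminf F \<sigma>") auto
  obtain u where u: "Limsup F \<sigma> = ereal u" using lo le hi by (cases "Limsup F \<sigma>") auto
  have "l = u"
  proof (rule ccontr)
    assume "l \<noteq> u"
    with l u le have "l < u" by simp
    then obtain p where p: "p \<in> \<rat>" "l < p" "p < u" using Rats_dense_in_real by blast
    then obtain q where q: "q \<in> \<rat>" "p < q" "q < u" using Rats_dense_in_real by blast
    have "x \<in> Eset f p q"
      unfolding Eset_def mem_Collect_eq
    proof (intro conjI allI impI)
      fix \<delta> :: real assume "0 < \<delta>"
      show "\<exists>c r. 0 < r \<and> r < \<delta> \<and> \<bar>x - c\<bar> < r \<and> sl f c r < p"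
      proof (rule ccontr)
        assume "\<not> ?thesis"
        then have H: "p \<le> sl f c r" if "0 < r" "r < \<delta>" "\<bar>x - c\<bar> < r" for c r
          using that not_less by blast
        have "eventually (\<lambda>z. ereal p \<le> \<sigma> z) F"
          unfolding evF \<sigma>_def using \<open>0 < \<delta>\<close> H by (auto intro!: exI[of _ \<delta>])
        then have "ereal p \<le> Liminf F \<sigma>" by (rule Liminf_bounded)
        then show False using l p by simp
      qed
    next
      fix \<delta> :: real assume "0 < \<delta>"
      show "\<exists>c r. 0 < r \<and> r < \<delta> \<and> \<bar>x - c\<bar> < r \<and> q < sl f c r"
      proof (rule ccontr)
        assume "\<not> ?thesis"
        then have H: "sl f c r \<le> q" if "0 < r" "r < \<delta>" "\<bar>x - c\<bar> < r" for c r
          using that not_less by blast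
        have "eventually (\<lambda>z. \<sigma> z \<le> ereal q) F"
          unfolding evF \<sigma>_def using \<open>0 < \<delta>\<close> H by (auto intro!: exI[of _ \<delta>])
        then have "Limsup F \<sigma> \<le> ereal q" by (rule Limsup_bounded)
        then show False using u q by simp
      qed
    qed
    then show False using notE p q by blast
  qed
  then have "(\<sigma> \<longlongrightarrow> ereal l) F"
    using l u by (intro Liminf_eq_Limsup[OF Fnb]) auto
  then have tl: "((\<lambda>z. sl f (fst z) (snd z)) \<longlongrightarrow> l) F"
    unfolding \<sigma>_def lim_ereal .
  have "(f has_real_derivative l) (at x)"
    unfolding has_field_derivative_iff
  proof (rule LIM_I)
    fix \<epsilon> :: real assume "0 < \<epsilon>"
    then have "eventually (\<lambda>z. dist (sl f (fst z) (snd z)) l < \<epsilon>/2) F"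
      using tl[unfolded tendsto_iff, rule_format, of "\<epsilon>/2"] \<open>0 < \<epsilon>\<close> by simp
    then obtain \<delta> where \<delta>: "\<delta> > 0"
      "\<And>c r. 0 < r \<Longrightarrow> r < \<delta> \<Longrightarrow> \<bar>x - c\<bar> < r \<Longrightarrow> \<bar>sl f c r - l\<bar> < \<epsilon>/2"
      unfolding evF by (auto simp: dist_real_def)
    show "\<exists>s>0. \<forall>y. y \<noteq> x \<and> norm (y - x) < s \<longrightarrow> norm ((f y - f x) / (y - x) - l) < \<epsilon>"
    proof (intro exI[of _ \<delta>] conjI allI impI)
      fix y assume y: "y \<noteq> x \<and> norm (y - x) < \<delta>"
      define a where "a = min x y"
      define D where "D = \<bar>y - x\<bar>"
      have D: "0 < D" "D < \<delta>" using y by (auto simp: D_def)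
      have Q: "(f y - f x) / (y - x) = (f (a + D) - f a) / D"
      proof (cases "x < y")
        case True
        then show ?thesis by (simp add: a_def D_def)
      next
        case False
        then have "y < x" using y by auto
        then have "a = y" "a + D = x" by (auto simp: a_def D_def)
        have "(f y - f x) / (y - x) = (f x - f y) / (x - y)"
          by (metis minus_diff_eq minus_divide_divide)
        then show ?thesis using \<open>a = y\<close> \<open>a + D = x\<close> by simp
      qed
      have lim: "((\<lambda>\<eta>. \<bar>sl f (a + D/2) (D/2 + \<eta>) - l\<bar>) \<longlongrightarrow> \<bar>(f (a + D) - f a) / D - l\<bar>) (at_right 0)"
        by (intro tendsto_intros chord_limit[OF lip D(1)])
      have ev: "eventually (\<lambda>\<eta>. \<bar>sl f (a + D/2) (D/2 + \<eta>) - l\<bar> \<le> \<epsilon>/2) (at_right 0)"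
        unfolding eventually_at_right_field
      proof (intro exI[of _ "\<delta> - D/2"] conjI allI impI)
        show "0 < \<delta> - D/2" using D by simp
        fix \<eta> :: real assume "0 < \<eta>" "\<eta> < \<delta> - D/2"
        moreover have "\<bar>x - (a + D/2)\<bar> = D/2" unfolding a_def D_def by (cases "x < y") (auto simp: abs_if field_simps)
        ultimately show "\<bar>sl f (a + D/2) (D/2 + \<eta>) - l\<bar> \<le> \<epsilon>/2"
          using D by (intro less_imp_le \<delta>(2)) auto
      qed
      have "\<bar>(f (a + D) - f a) / D - l\<bar> \<le> \<epsilon>/2"
        by (rule tendsto_upperbound[OF lim ev]) simp
      then show "norm ((f y - f x) / (y - x) - l) < \<epsilon>"
        using Q \<open>0 < \<epsilon>\<close> by simp
    qed (rule \<delta>(1))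
  qed
  then show ?thesis by blast
qed


lemma Eset_shift:
  fixes f g :: "real \<Rightarrow> real"
  assumes sh: "\<And>c r. 0 < r \<Longrightarrow> sl g c r = sl f c r + L"
  shows "Eset f p q \<subseteq> Eset g (p + L) (q + L)"
proof
  fix x assume "x \<in> Eset f p q"
  then have A: "\<forall>\<delta>>0. \<exists>c r. 0 < r \<and> r < \<delta> \<and> \<bar>x - c\<bar> < r \<and> sl f c r < p"
    and B: "\<forall>\<delta>>0. \<exists>c r. 0 < r \<and> r < \<delta> \<and> \<bar>x - c\<bar> < r \<and> q < sl f c r"
    by (simp_all add: Eset_def)
  show "x \<in> Eset g (p + L) (q + L)"
    unfolding Eset_def mem_Collect_eq
  proof (intro conjI allI impI)
    fix \<delta> :: real assume "0 < \<delta>"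
    then obtain c r where "0 < r" "r < \<delta>" "\<bar>x - c\<bar> < r" "sl f c r < p" using A by blast
    then show "\<exists>c r. 0 < r \<and> r < \<delta> \<and> \<bar>x - c\<bar> < r \<and> sl g c r < p + L"
      using sh by (intro exI[of _ c] exI[of _ r]) auto
  next
    fix \<delta> :: real assume "0 < \<delta>"
    then obtain c r where "0 < r" "r < \<delta>" "\<bar>x - c\<bar> < r" "q < sl f c r" using B by blast
    then show "\<exists>c r. 0 < r \<and> r < \<delta> \<and> \<bar>x - c\<bar> < r \<and> q + L < sl g c r"
      using sh by (intro exI[of _ c] exI[of _ r]) auto
  qed
qed

lemma lip_dense:
  fixes f :: "real \<Rightarrow> real"
  assumes lip: "L-lipschitz_on UNIV f" and ab: "a < b"
  shows "\<exists>x\<in>{a<..<b}. \<exists>d. (f has_real_derivative d) (at x)"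
proof (rule ccontr)
  assume nx: "\<not> ?thesis"
  define g where "g x = f x + L * x" for x
  have L0: "0 \<le> L" using lip by (simp add: lipschitz_on_def)
  have mono: "mono g"
  proof (rule monoI)
    fix x y :: real assume "x \<le> y"
    have "dist (f x) (f y) \<le> L * dist x y" by (rule lipschitz_onD[OF lip]) auto
    then have "\<bar>f x - f y\<bar> \<le> L * (y - x)" using \<open>x \<le> y\<close> by (simp add: dist_real_def)
    then show "g x \<le> g y" unfolding g_def by (simp add: algebra_simps abs_le_iff)
  qed
  have cont: "continuous_on UNIV g"
    unfolding g_def by (intro continuous_intros lipschitz_on_continuous_on[OF lip])
  have sh: "sl g c r = sl f c r + L" if "0 < r" for c r
    using that unfolding sl_def g_def by (simp add: field_simps)
  define I where "I = {(p::real, q::real). p \<in> \<rat> \<and> q \<in> \<rat> \<and> p < q}"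
  have cI: "countable I"
  proof -
    have "I \<subseteq> \<rat> \<times> \<rat>" unfolding I_def by auto
    moreover have "countable ((\<rat>::real set) \<times> (\<rat>::real set))" using countable_rat by (intro countable_SIGMA) auto
    ultimately show ?thesis by (rule countable_subset)
  qed
  have negI: "negligible (\<Union>((\<lambda>(p, q). Eset f p q) ` I))"
  proof (rule negligible_countable_Union)
    show "countable ((\<lambda>(p, q). Eset f p q) ` I)" using cI by simp
    fix T assume "T \<in> (\<lambda>(p, q). Eset f p q) ` I"
    then obtain p q where pq: "p < q" "T = Eset f p q" unfolding I_def by auto
    have "negligible (Eset g (p + L) (q + L))" using pq by (intro core[OF mono cont]) simp
    then show "negligible T" using pq Eset_shift[OF sh] by (metis negligible_subset)
  qed
  have "{a<..<b} \<subseteq> \<Union>((\<lambda>(p, q). Eset f p q) ` I)"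
  proof
    fix x assume x: "x \<in> {a<..<b}"
    have "\<exists>p q. p \<in> \<rat> \<and> q \<in> \<rat> \<and> p < q \<and> x \<in> Eset f p q"
    proof (rule ccontr)
      assume "\<not> ?thesis"
      then have "\<exists>d. (f has_real_derivative d) (at x)"
        by (intro diff_from_E[OF lip]) blast
      then show False using nx x by blast
    qed
    then show "x \<in> \<Union>((\<lambda>(p, q). Eset f p q) ` I)" unfolding I_def by blast
  qed
  then have "negligible {a<..<b}" using negI by (rule negligible_subset[rotated])
  moreover have "\<not> negligible {a<..<b}" using ab by (intro open_not_negligible) auto
  ultimately show False by blast
qed

lemma touch:
  fixes H :: "real \<Rightarrow> real \<Rightarrow> 'w \<Rightarrow> real"
  assumes vs: "visc_sub H \<omega> \<mu> v" and H6: "\<forall>p y \<omega>. H p y \<omega> \<ge> H 0 y \<omega>" and r: "0 < r"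
  shows "\<exists>y'. \<bar>y' - y\<bar> < r \<and> H 0 y' \<omega> \<le> \<mu>"
proof -
  have vc: "continuous_on UNIV v" using vs[unfolded visc_sub_def] by (rule conjunct1)
  have vt: "\<forall>\<phi> \<phi>' y. (\<forall>x. (\<phi> has_real_derivative \<phi>' x) (at x)) \<and> continuous_on UNIV \<phi>' \<and>
        (\<exists>r>0. \<forall>x. \<bar>x - y\<bar> < r \<longrightarrow> v x - \<phi> x \<le> v y - \<phi> y)
        \<longrightarrow> H (\<phi>' y) y \<omega> \<le> \<mu>" using vs[unfolded visc_sub_def] by (rule conjunct2)
  define K where "K = (max (v (y - r)) (v (y + r)) - v y) / r^2 + 1"
  define \<phi> where "\<phi> x = K * (x - y)^2" for x
  define \<phi>' where "\<phi>' x = 2 * K * (x - y)" for x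
  define h where "h x = v x - \<phi> x" for x
  have Kr: "K * r^2 = max (v (y - r)) (v (y + r)) - v y + r^2"
    using r unfolding K_def by (simp add: field_simps)
  have hc: "continuous_on {y-r..y+r} h"
    unfolding h_def \<phi>_def
    by (intro continuous_intros continuous_on_subset[OF vc]) auto
  obtain y' where y': "y' \<in> {y-r..y+r}" "\<forall>z\<in>{y-r..y+r}. h z \<le> h y'"
    using continuous_attains_sup[OF compact_Icc _ hc] r by auto
  have "h y \<le> h y'" using y' r by auto
  then have hy': "v y \<le> h y'" by (simp add: h_def \<phi>_def)
  have r2: "0 < r^2" using r by simp
  have hp: "h (y + r) = v (y + r) - K * r^2" "h (y - r) = v (y - r) - K * r^2"
    by (simp_all add: h_def \<phi>_def)
  have mx: "v (y + r) \<le> max (v (y - r)) (v (y + r))" "v (y - r) \<le> max (v (y - r)) (v (y + r))"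
    by simp_all
  have "h (y + r) < v y" using hp mx Kr r2 by linarith
  moreover have "h (y - r) < v y" using hp mx Kr r2 by linarith
  ultimately have "y' \<noteq> y + r" "y' \<noteq> y - r" using hy' by auto
  then have yy: "\<bar>y' - y\<bar> < r" using y'(1) by auto
  define \<rho> where "\<rho> = r - \<bar>y' - y\<bar>"
  have \<rho>: "\<rho> > 0" using yy by (simp add: \<rho>_def)
  have "H (\<phi>' y') y' \<omega> \<le> \<mu>"
  proof (rule vt[rule_format], intro conjI)
    show "\<forall>x. (\<phi> has_real_derivative \<phi>' x) (at x)"
      unfolding \<phi>_def \<phi>'_def by (auto intro!: derivative_eq_intros)
    show "continuous_on UNIV \<phi>'" unfolding \<phi>'_def by (intro continuous_intros)
    show "\<exists>r>0. \<forall>x. \<bar>x - y'\<bar> < r \<longrightarrow> v x - \<phi> x \<le> v y' - \<phi> y'"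
    proof (intro exI[of _ \<rho>] conjI allI impI)
      fix x assume "\<bar>x - y'\<bar> < \<rho>"
      then have "x \<in> {y-r..y+r}" unfolding \<rho>_def by auto
      then show "v x - \<phi> x \<le> v y' - \<phi> y'" using y'(2) unfolding h_def by blast
    qed (rule \<rho>)
  qed
  moreover have "H 0 y' \<omega> \<le> H (\<phi>' y') y' \<omega>" using H6 by blast
  ultimately show ?thesis using yy by auto
qed

theorem lemma4p1:
  fixes H :: "real \<Rightarrow> real \<Rightarrow> 'w \<Rightarrow> real"
  assumes H1: "\<exists>L. \<forall>p q y \<omega>. \<bar>H p y \<omega> - H q y \<omega>\<bar> \<le> L * \<bar>p - q\<bar>"
    and H2: "\<exists>c0 C0 \<gamma>. c0 > 0 \<and> C0 > 0 \<and> \<gamma> > 0 \<and>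
               (\<forall>p y \<omega>. - c0 * \<bar>p + \<gamma>\<bar> \<le> H p y \<omega> \<and> H p y \<omega> \<le> C0 * \<bar>p + \<gamma>\<bar>)"
    and H3: "\<forall>M. \<exists>R. \<forall>p y \<omega>. \<bar>p\<bar> \<ge> R \<longrightarrow> H p y \<omega> \<ge> M"
    and H4: "\<exists>w :: real \<Rightarrow> real. w 0 = 0 \<and> (w \<longlongrightarrow> 0) (at_right 0) \<and>
               (\<forall>p x y \<omega>. \<bar>H p y \<omega> - H p x \<omega>\<bar> \<le> w (\<bar>x - y\<bar> * (1 + \<bar>p\<bar>)))"
    and H5: "\<forall>y \<omega>. convex_on UNIV (\<lambda>p. H p y \<omega>)"
    and H6: "\<forall>p y \<omega>. H p y \<omega> \<ge> H 0 y \<omega>"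
  shows "flux_limiter H \<omega> = (INF v\<in>Lip. sup_H_Dv H \<omega> v)
       \<and> (INF v\<in>Lip. sup_H_Dv H \<omega> v) = (SUP y. ereal (H 0 y \<omega>))
       \<and> (SUP y. ereal (H 0 y \<omega>)) < \<infinity>"
proof -
  obtain C0 \<gamma> where C0: "C0 > 0" "\<gamma> > 0" and Cb: "\<And>p y. H p y \<omega> \<le> C0 * \<bar>p + \<gamma>\<bar>"
    using H2 by blast
  obtain w :: "real \<Rightarrow> real" where w0: "w 0 = 0" and wl: "(w \<longlongrightarrow> 0) (at_right 0)"
    and wH: "\<And>p x y. \<bar>H p y \<omega> - H p x \<omega>\<bar> \<le> w (\<bar>x - y\<bar> * (1 + \<bar>p\<bar>))"
    using H4 by blast
  define S where "S = (SUP y. ereal (H 0 y \<omega>))"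
  have ub: "H 0 y \<omega> \<le> C0 * \<gamma>" for y using Cb[of 0 y] C0 by simp
  have Sfin: "S < \<infinity>"
  proof -
    have "S \<le> ereal (C0 * \<gamma>)" unfolding S_def by (rule SUP_least) (use ub in simp)
    then show ?thesis by (rule le_less_trans) simp
  qed
  have Sge: "ereal (H 0 y \<omega>) \<le> S" for y unfolding S_def by (rule SUP_upper) simp
  have cont0: "\<exists>b>0. \<forall>y y'. \<bar>y' - y\<bar> < b \<longrightarrow> H 0 y \<omega> \<le> H 0 y' \<omega> + e" if e: "e > 0" for e
  proof -
    have "eventually (\<lambda>t. dist (w t) 0 < e) (at_right 0)"
      using wl[unfolded tendsto_iff, rule_format, OF e] .
    then obtain b where b: "b > 0" "\<And>t. 0 < t \<Longrightarrow> t < b \<Longrightarrow> \<bar>w t\<bar> < e"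
      unfolding eventually_at_right_field by (auto simp: dist_real_def)
    show ?thesis
    proof (intro exI[of _ b] conjI allI impI)
      fix y y' :: real assume yy: "\<bar>y' - y\<bar> < b"
      have "\<bar>H 0 y \<omega> - H 0 y' \<omega>\<bar> \<le> w (\<bar>y' - y\<bar> * (1 + \<bar>0\<bar>))" by (rule wH)
      then have 1: "H 0 y \<omega> \<le> H 0 y' \<omega> + w \<bar>y' - y\<bar>" by simp
      show "H 0 y \<omega> \<le> H 0 y' \<omega> + e"
      proof (cases "y' = y")
        case True then show ?thesis using e by simp
      next
        case False
        then have "\<bar>w \<bar>y' - y\<bar>\<bar> < e" using b(2)[of "\<bar>y' - y\<bar>"] yy by simp
        then show ?thesis using 1 by linarith
      qed
    qed (rule b(1))
  qed
  have zeroLip: "(\<lambda>_. 0) \<in> Lip" unfolding Lip_def by (auto intro!: exI[of _ 0] simp: lipschitz_on_def)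
  have sup0: "sup_H_Dv H \<omega> (\<lambda>_. 0) = S"
  proof -
    have "{ereal (H d y \<omega>) | d y. ((\<lambda>_. 0) has_real_derivative d) (at y)} = range (\<lambda>y. ereal (H 0 y \<omega>))"
    proof (intro equalityI subsetI)
      fix z assume "z \<in> {ereal (H d y \<omega>) | d y. ((\<lambda>_. 0) has_real_derivative d) (at y)}"
      then obtain d y where "z = ereal (H d y \<omega>)" "((\<lambda>_. 0) has_real_derivative d) (at y)" by blast
      moreover then have "d = 0" using DERIV_unique DERIV_const by blast
      ultimately show "z \<in> range (\<lambda>y. ereal (H 0 y \<omega>))" by simp
    next
      fix z assume "z \<in> range (\<lambda>y. ereal (H 0 y \<omega>))"
      then obtain y where "z = ereal (H 0 y \<omega>)" by blast
      moreover have "((\<lambda>_. 0) has_real_derivative 0) (at y)" by (rule DERIV_const)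
      ultimately show "z \<in> {ereal (H d y \<omega>) | d y. ((\<lambda>_. 0) has_real_derivative d) (at y)}" by blast
    qed
    then show ?thesis unfolding sup_H_Dv_def S_def by simp
  qed
  have geS: "S \<le> sup_H_Dv H \<omega> v" if vL: "v \<in> Lip" for v
  proof -
    obtain L where L: "L-lipschitz_on UNIV v" using vL unfolding Lip_def by blast
    show ?thesis unfolding S_def
    proof (rule SUP_least)
      fix y
      show "ereal (H 0 y \<omega>) \<le> sup_H_Dv H \<omega> v"
      proof (rule ereal_le_epsilon2)
        fix e :: real assume e: "0 < e"
        obtain b where b: "b > 0" "\<And>y y'. \<bar>y' - y\<bar> < b \<Longrightarrow> H 0 y \<omega> \<le> H 0 y' \<omega> + e"
          using cont0[OF e] by blast
        obtain y' d where y': "y' \<in> {y - b<..<y + b}" "(v has_real_derivative d) (at y')"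
          using lip_dense[OF L, of "y - b" "y + b"] b(1) by auto
        have "H 0 y \<omega> \<le> H d y' \<omega> + e"
          using b(2)[of y' y] y'(1) H6 by (smt (verit) greaterThanLessThan_iff)
        then have "ereal (H 0 y \<omega>) \<le> ereal (H d y' \<omega>) + ereal e" by simp
        also have "ereal (H d y' \<omega>) \<le> sup_H_Dv H \<omega> v"
          unfolding sup_H_Dv_def by (rule Sup_upper) (use y'(2) in blast)
        finally show "ereal (H 0 y \<omega>) \<le> sup_H_Dv H \<omega> v + ereal e" by (simp add: add_right_mono)
      qed
    qed
  qed
  have INFeq: "(INF v\<in>Lip. sup_H_Dv H \<omega> v) = S"
  proof (rule antisym)
    show "(INF v\<in>Lip. sup_H_Dv H \<omega> v) \<le> S" using sup0 zeroLip by (metis INF_lower)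
    show "S \<le> (INF v\<in>Lip. sup_H_Dv H \<omega> v)" by (rule INF_greatest) (rule geS)
  qed
  obtain s where s: "S = ereal s"
  proof (cases S)
    case (real r) then show ?thesis using that by blast
  next
    case PInf then show ?thesis using Sfin by simp
  next
    case MInf then show ?thesis using Sge[of 0] by simp
  qed
  define M where "M = {\<mu>. \<exists>v\<in>Lip. visc_sub H \<omega> \<mu> v}"
  have sM: "s \<in> M"
    unfolding M_def
  proof (intro CollectI bexI[OF _ zeroLip])
    show "visc_sub H \<omega> s (\<lambda>_. 0)"
      unfolding visc_sub_def
    proof (intro conjI allI impI)
      show "continuous_on UNIV (\<lambda>_. 0::real)" by simp
      fix \<phi> \<phi>' :: "real \<Rightarrow> real" and y :: real
      assume A: "(\<forall>x. (\<phi> has_real_derivative \<phi>' x) (at x)) \<and> continuous_on UNIV \<phi>' \<and>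
        (\<exists>r>0. \<forall>x. \<bar>x - y\<bar> < r \<longrightarrow> (0::real) - \<phi> x \<le> 0 - \<phi> y)"
      then obtain r where r: "r > 0" "\<forall>x. \<bar>x - y\<bar> < r \<longrightarrow> - \<phi> x \<le> - \<phi> y" by auto
      have "\<phi>' y = 0"
      proof (rule DERIV_local_min)
        show "(\<phi> has_real_derivative \<phi>' y) (at y)" using A by blast
        show "0 < r" by (rule r(1))
        show "\<forall>z. \<bar>y - z\<bar> < r \<longrightarrow> \<phi> y \<le> \<phi> z" using r(2) by (simp add: abs_minus_commute)
      qed
      then show "H (\<phi>' y) y \<omega> \<le> s" using Sge[of y] s by simp
    qed
  qed
  have flux: "flux_limiter H \<omega> = S"
  proof (rule antisym)
    show "flux_limiter H \<omega> \<le> S"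
      unfolding flux_limiter_def s using sM M_def by (intro Inf_lower) auto
    show "S \<le> flux_limiter H \<omega>"
      unfolding flux_limiter_def
    proof (rule Inf_greatest)
      fix z assume "z \<in> ereal ` {\<mu>. \<exists>v\<in>Lip. visc_sub H \<omega> \<mu> v}"
      then obtain \<mu> v where z: "z = ereal \<mu>" "visc_sub H \<omega> \<mu> v" by blast
      have "H 0 y \<omega> \<le> \<mu>" for y
      proof (rule field_le_epsilon)
        fix e :: real assume e: "0 < e"
        obtain b where b: "b > 0" "\<And>y y'. \<bar>y' - y\<bar> < b \<Longrightarrow> H 0 y \<omega> \<le> H 0 y' \<omega> + e"
          using cont0[OF e] by blast
        obtain y' where "\<bar>y' - y\<bar> < b" "H 0 y' \<omega> \<le> \<mu>" using touch[OF z(2) H6 b(1)] by blast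
        then show "H 0 y \<omega> \<le> \<mu> + e" using b(2) by fastforce
      qed
      then show "S \<le> z" unfolding S_def z by (intro SUP_least) simp
    qed
  qed
  show ?thesis using flux INFeq Sfin unfolding S_def by simp
qed

end
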